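(* Let $\Lambda$ be a finite set of $N_s\ge2$ sites, let $t>0$ and $\lambda_x>0$ for each $x\in\Lambda$, and consider the Hubbard model with hopping matrix $t_{x,y}=t\lambda_x\lambda_y$ (for all $x,y\in\Lambda$, including $x=y$) and electron number $N_e=N_s-1$. Then for any $U>0$ the ground states of $H$ in $\mathcal H_{N_e}$ have total spin $S_{\rm tot}=S_{\max}=N_e/2$ and are nondegenerate apart from the trivial $(2S_{\max}+1)$-fold degeneracy, i.e. the ground-state eigenspace has dimension exactly $2S_{\max}+1$ and every ground state has $S_{\rm tot}=S_{\max}$.
   Context: For $x\in\Lambda$, $\sigma\in\{\uparrow,\downarrow\}$, $c_{x,\sigma}$ are fermion annihilation operators with $\{c^\dagger_{x,\sigma},c_{y,\tau}\}=\delta_{x,y}\delta_{\sigma,\tau}$, $\{c_{x,\sigma},c_{y,\tau}\}=\{c^\dagger_{x,\sigma},c^\dagger_{y,\tau}\}=0$, vacuum $\Phi_{\rm vac}$ with $c_{x,\sigma}\Phi_{\rm vac}=0$; $\mathcal H_{N_e}$ is the span of $c^\dagger_{x_1,\sigma_1}\cdots c^\dagger_{x_{N_e},\sigma_{N_e}}\Phi_{\rm vac}$. $n_{x,\sigma}=c^\dagger_{x,\sigma}c_{x,\sigma}$. The Hubbard Hamiltonian is $H=\sum_{x,y\in\Lambda}\sum_\sigma t_{x,y}c^\dagger_{x,\sigma}c_{y,\sigma}+U\sum_x n_{x,\uparrow}n_{x,\downarrow}$ on $\mathcal H_{N_e}$. Total spin operators $S^{(\alpha)}_{\rm tot}=\frac12\sum_x\sum_{\sigma,\tau}c^\dagger_{x,\sigma}(p^{(\alpha)})_{\sigma,\tau}c_{x,\tau}$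 (Pauli matrices $p^{(\alpha)}$); a state has total spin $S_{\rm tot}$ if $\sum_\alpha(S^{(\alpha)}_{\rm tot})^2$ acts as $S_{\rm tot}(S_{\rm tot}+1)$; $S_{\max}=N_e/2$ for $N_e\le N_s$. *)

theory Defs
  imports Complex_Main "HOL-Library.Function_Algebras"
begin

text \<open>A mode is a pair (x, sigma) with x a site and
  sigma :: bool the spin (True = up, False = down).  A state is a
  complex-valued function on finite sets of modes: psi S is the coefficient
  of the basis vector  c^dag_{m_1} ... c^dag_{m_k} Phi_vac,  where
  S = {m_1,...,m_k} and m_1 < ... < m_k in the fixed mode ordering midx.\<close>

type_synonym mode = "nat \<times> bool"
type_synonym fvec = "mode set \<Rightarrow> complex"

definition midx :: "mode \<Rightarrow> nat" where
  "midx m = 2 * fst m + (if snd m then 0 else 1)"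

definition fsign :: "mode set \<Rightarrow> mode \<Rightarrow> complex" where
  "fsign S m = (-1) ^ card {m' \<in> S. midx m' < midx m}"

definition ann :: "mode \<Rightarrow> fvec \<Rightarrow> fvec" where
  "ann m \<psi> = (\<lambda>S. if m \<notin> S then fsign S m * \<psi> (insert m S) else 0)"

definition cre :: "mode \<Rightarrow> fvec \<Rightarrow> fvec" where
  "cre m \<psi> = (\<lambda>S. if m \<in> S then fsign S m * \<psi> (S - {m}) else 0)"

definition num :: "mode \<Rightarrow> fvec \<Rightarrow> fvec" where
  "num m \<psi> = cre m (ann m \<psi>)"

definition Hspace :: "nat \<Rightarrow> nat \<Rightarrow> fvec set" where
  "Hspace Ns Ne = {\<psi>. \<forall>S. \<psi> S \<noteq> 0 \<longrightarrow> S \<subseteq> {..<Ns} \<times> UNIV \<and> card S = Ne}"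

definition hubbardH :: "nat \<Rightarrow> (nat \<Rightarrow> nat \<Rightarrow> real) \<Rightarrow> real \<Rightarrow> fvec \<Rightarrow> fvec" where
  "hubbardH Ns tt U \<psi> = (\<lambda>S.
     (\<Sum>x<Ns. \<Sum>y<Ns. \<Sum>\<sigma>\<in>UNIV. complex_of_real (tt x y) * cre (x,\<sigma>) (ann (y,\<sigma>) \<psi>) S)
     + complex_of_real U * (\<Sum>x<Ns. num (x,True) (num (x,False) \<psi>) S))"

text \<open>Pauli matrices p^(1), p^(2), p^(3); row/column index True = up, False = down.\<close>
definition pauli :: "nat \<Rightarrow> bool \<Rightarrow> bool \<Rightarrow> complex" where
  "pauli a \<sigma> \<tau> =
     (if a = 1 then (if \<sigma> \<noteq> \<tau> then 1 else 0)
      else if a = 2 then (if \<sigma> = \<tau> then 0 else if \<sigma> then - \<i> else \<i>)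
      else (if \<sigma> \<noteq> \<tau> then 0 else if \<sigma> then 1 else -1))"

definition Stot :: "nat \<Rightarrow> nat \<Rightarrow> fvec \<Rightarrow> fvec" where
  "Stot Ns a \<psi> = (\<lambda>S. (1/2) * (\<Sum>x<Ns. \<Sum>\<sigma>\<in>UNIV. \<Sum>\<tau>\<in>UNIV.
                         pauli a \<sigma> \<tau> * cre (x,\<sigma>) (ann (x,\<tau>) \<psi>) S))"

definition Stot2 :: "nat \<Rightarrow> fvec \<Rightarrow> fvec" where
  "Stot2 Ns \<psi> = (\<lambda>S. \<Sum>a\<in>{1,2,3}. Stot Ns a (Stot Ns a \<psi>) S)"

definition hasTotalSpin :: "nat \<Rightarrow> real \<Rightarrow> fvec \<Rightarrow> bool" where
  "hasTotalSpin Ns s \<psi> \<longleftrightarrow> Stot2 Ns \<psi> = (\<lambda>S. complex_of_real (s * (s + 1)) * \<psi> S)"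

text \<open>Ground-state energy: the lowest eigenvalue of H on H_{N_e}
  (H is Hermitian, so all eigenvalues are real).\<close>
definition groundEnergy :: "nat \<Rightarrow> (nat \<Rightarrow> nat \<Rightarrow> real) \<Rightarrow> real \<Rightarrow> nat \<Rightarrow> real" where
  "groundEnergy Ns tt U Ne = Inf {E. \<exists>\<psi>\<in>Hspace Ns Ne. (\<exists>S. \<psi> S \<noteq> 0) \<and>
        hubbardH Ns tt U \<psi> = (\<lambda>S. complex_of_real E * \<psi> S)}"

definition groundSpace :: "nat \<Rightarrow> (nat \<Rightarrow> nat \<Rightarrow> real) \<Rightarrow> real \<Rightarrow> nat \<Rightarrow> fvec set" where
  "groundSpace Ns tt U Ne = {\<psi>\<in>Hspace Ns Ne.
        hubbardH Ns tt U \<psi> = (\<lambda>S. complex_of_real (groundEnergy Ns tt U Ne) * \<psi> S)}"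

definition cdim :: "fvec set \<Rightarrow> nat" where
  "cdim V = vector_space.dim (\<lambda>c (\<psi>::fvec). (\<lambda>S. c * \<psi> S)) V"

end

theory Submission
  imports Defs
begin


lemma midx_inj: "midx a = midx b \<Longrightarrow> a = b"
  by (cases a; cases b) (auto simp: midx_def split: if_splits; presburger)

lemma midx_less: "midx (y,b) < midx (x,c) \<longleftrightarrow> y < x \<or> (y = x \<and> b \<and> \<not> c)"
  by (auto simp: midx_def split: if_splits)

lemma fsign_sq: "fsign S m * fsign S m = 1"
  by (simp add: fsign_def power_mult_distrib[symmetric] flip: power_add mult_2)

lemma fsign_cnj: "cnj (fsign S m) = fsign S m"
  by (simp add: fsign_def)

lemma fsign_insert_self: "fsign (insert m S) m = fsign S m"
  unfolding fsign_def by (rule arg_cong[where f="\<lambda>n. (-1)^n"], rule arg_cong[where f=card]) auto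

lemma fsign_remove_self: "fsign (S - {m}) m = fsign S m"
  unfolding fsign_def by (rule arg_cong[where f="\<lambda>n. (-1)^n"], rule arg_cong[where f=card]) auto

lemma cre_ann:
  "cre (x,\<sigma>) (ann (x,\<tau>) \<psi>) S =
    (if (x,\<sigma>) \<in> S \<and> (x,\<tau>) \<notin> S - {(x,\<sigma>)} then \<psi> (insert (x,\<tau>) (S - {(x,\<sigma>)})) else 0)"
proof (cases "(x,\<sigma>) \<in> S \<and> (x,\<tau>) \<notin> S - {(x,\<sigma>)}")
  case True
  have eq: "{m'\<in>S. midx m' < midx (x,\<sigma>)} = {m'\<in>S - {(x,\<sigma>)}. midx m' < midx (x,\<tau>)}"
  proof (intro set_eqI iffI)
    fix m assume m: "m \<in> {m'\<in>S. midx m' < midx (x,\<sigma>)}"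
    obtain y b where mb: "m = (y,b)" by (cases m)
    show "m \<in> {m'\<in>S - {(x,\<sigma>)}. midx m' < midx (x,\<tau>)}"
      using m True unfolding mb by (cases "y = x"; cases b; cases \<sigma>; cases \<tau>; simp add: midx_less)
  next
    fix m assume m: "m \<in> {m'\<in>S - {(x,\<sigma>)}. midx m' < midx (x,\<tau>)}"
    obtain y b where mb: "m = (y,b)" by (cases m)
    show "m \<in> {m'\<in>S. midx m' < midx (x,\<sigma>)}"
      using m True unfolding mb by (cases "y = x"; cases b; cases \<sigma>; cases \<tau>; simp add: midx_less)
  qed
  have p: "fsign S (x,\<sigma>) * fsign (S - {(x,\<sigma>)}) (x,\<tau>) = 1"
    unfolding fsign_def eq[symmetric] by (simp flip: power_add mult_2)
  have "cre (x,\<sigma>) (ann (x,\<tau>) \<psi>) S = fsign S (x,\<sigma>) * (fsign (S - {(x,\<sigma>)}) (x,\<tau>) * \<psi> (insert (x,\<tau>) (S - {(x,\<sigma>)})))"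
    using True by (simp add: cre_def ann_def)
  also have "\<dots> = \<psi> (insert (x,\<tau>) (S - {(x,\<sigma>)}))"
    by (metis mult.assoc mult_1 p)
  finally show ?thesis using True by simp
next
  case F: False
  show ?thesis
  proof (cases "(x,\<sigma>) \<in> S")
    case True
    with F have "(x,\<tau>) \<in> S - {(x,\<sigma>)}" by blast
    then show ?thesis using F by (simp add: cre_def ann_def)
  next
    case False
    then show ?thesis by (simp add: cre_def)
  qed
qed

lemma num_eq: "num m \<psi> S = (if m \<in> S then \<psi> S else 0)"
proof -
  obtain x \<sigma> where m: "m = (x,\<sigma>)" by (cases m)
  show ?thesis unfolding num_def m cre_ann by (auto simp: insert_absorb)
qed

lemma cre_lin: "cre m (\<lambda>S. \<Sum>i\<in>I. f i * \<phi> i S) S = (\<Sum>i\<in>I. f i * cre m (\<phi> i) S)"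
  unfolding cre_def by (auto simp: sum_distrib_left algebra_simps)

lemma cre_zero: "cre m (\<lambda>_. 0) S = 0"
  unfolding cre_def by auto

lemma adjoint:
  assumes "m \<in> M" "finite M"
  shows "(\<Sum>S\<in>Pow M. cnj (\<phi> S) * cre m \<chi> S) = (\<Sum>S\<in>Pow M. cnj (ann m \<phi> S) * \<chi> S)"
proof -
  have fin: "finite (Pow M)" using assms by simp
  have L: "(\<Sum>S\<in>Pow M. cnj (\<phi> S) * cre m \<chi> S) = (\<Sum>S\<in>{S\<in>Pow M. m \<in> S}. cnj (\<phi> S) * fsign S m * \<chi> (S - {m}))"
  proof -
    have "(\<Sum>S\<in>Pow M. cnj (\<phi> S) * cre m \<chi> S) = (\<Sum>S\<in>Pow M. if m \<in> S then cnj (\<phi> S) * fsign S m * \<chi> (S - {m}) else 0)"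
      by (rule sum.cong) (auto simp: cre_def)
    also have "\<dots> = (\<Sum>S\<in>{S\<in>Pow M. m \<in> S}. cnj (\<phi> S) * fsign S m * \<chi> (S - {m}))" by (rule sum.inter_filter[OF fin, symmetric])
    finally show ?thesis .
  qed
  have R: "(\<Sum>S\<in>Pow M. cnj (ann m \<phi> S) * \<chi> S) = (\<Sum>S\<in>{S\<in>Pow M. m \<notin> S}. cnj (\<phi> (insert m S)) * fsign S m * \<chi> S)"
  proof -
    have "(\<Sum>S\<in>Pow M. cnj (ann m \<phi> S) * \<chi> S) = (\<Sum>S\<in>Pow M. if m \<notin> S then cnj (\<phi> (insert m S)) * fsign S m * \<chi> S else 0)"
      by (rule sum.cong) (auto simp: ann_def fsign_cnj)
    also have "\<dots> = (\<Sum>S\<in>{S\<in>Pow M. m \<notin> S}. cnj (\<phi> (insert m S)) * fsign S m * \<chi> S)" by (rule sum.inter_filter[OF fin, symmetric])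
    finally show ?thesis .
  qed
  have bij: "bij_betw (insert m) {S\<in>Pow M. m \<notin> S} {S\<in>Pow M. m \<in> S}"
    by (rule bij_betw_byWitness[where f'="\<lambda>S. S - {m}"]) (use assms in auto)
  have "(\<Sum>S\<in>{S\<in>Pow M. m \<in> S}. cnj (\<phi> S) * fsign S m * \<chi> (S - {m}))
      = (\<Sum>S\<in>{S\<in>Pow M. m \<notin> S}. cnj (\<phi> (insert m S)) * fsign (insert m S) m * \<chi> (insert m S - {m}))"
    by (rule sum.reindex_bij_betw[symmetric, OF bij])
  also have "\<dots> = (\<Sum>S\<in>{S\<in>Pow M. m \<notin> S}. cnj (\<phi> (insert m S)) * fsign S m * \<chi> S)"
    by (rule sum.cong) (auto simp: fsign_insert_self)
  finally show ?thesis using L R by simp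
qed



locale hub =
  fixes Ns :: nat and lam :: "nat \<Rightarrow> real"
  assumes Ns2: "2 \<le> Ns" and lam_pos: "\<forall>x<Ns. lam x > 0"
begin

abbreviation N where "N \<equiv> Ns - 1"

definition conf :: "nat \<Rightarrow> (nat \<Rightarrow> bool) \<Rightarrow> mode set" where
  "conf h s = (\<lambda>x. (x, s x)) ` ({..<Ns} - {h})"
definition valid :: "mode set \<Rightarrow> bool" where "valid S \<longleftrightarrow> (\<exists>h<Ns. \<exists>s. S = conf h s)"
definition hole :: "mode set \<Rightarrow> nat" where "hole S = (THE h. h < Ns \<and> (\<exists>s. S = conf h s))"
definition cnt :: "nat \<Rightarrow> (nat \<Rightarrow> bool) \<Rightarrow> nat" where "cnt h s = card {x. x<Ns \<and> x \<noteq> h \<and> s x}"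
definition ups :: "mode set \<Rightarrow> nat" where "ups S = card {m\<in>S. snd m}"
definition wh :: "nat \<Rightarrow> complex" where "wh h = (-1)^h * complex_of_real (lam h)"
definition K :: "(nat \<Rightarrow> complex) \<Rightarrow> fvec" where
  "K F S = (if valid S then F (ups S) * wh (hole S) else 0)"
definition Aop :: "bool \<Rightarrow> fvec \<Rightarrow> fvec" where
  "Aop \<sigma> \<psi> S = (\<Sum>y<Ns. complex_of_real (lam y) * ann (y,\<sigma>) \<psi> S)"
definition nodbl :: "fvec \<Rightarrow> bool" where
  "nodbl \<psi> \<longleftrightarrow> (\<forall>S x. (x,True) \<in> S \<and> (x,False) \<in> S \<longrightarrow> \<psi> S = 0)"

lemma conf_mem[simp]: "(y,b) \<in> conf h s \<longleftrightarrow> y < Ns \<and> y \<noteq> h \<and> b = s y"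
  unfolding conf_def by auto

lemma conf_hole_eq: assumes "h < Ns" "h' < Ns" "conf h s = conf h' s'" shows "h = h'"
proof (rule ccontr)
  assume "h \<noteq> h'"
  then have "(h', s h') \<in> conf h s" using assms(1,2) by simp
  then have "(h', s h') \<in> conf h' s'" using assms(3) by simp
  then show False by simp
qed

lemma hole_conf[simp]: "h < Ns \<Longrightarrow> hole (conf h s) = h"
  unfolding hole_def
  by (rule the_equality) (auto dest: conf_hole_eq)

lemma wh_nz: "h < Ns \<Longrightarrow> wh h \<noteq> 0"
  using lam_pos unfolding wh_def by auto

lemma cnt_conf: "ups (conf h s) = cnt h s"
proof -
  have "{m\<in>conf h s. snd m} = (\<lambda>x. (x, s x)) ` {x. x<Ns \<and> x \<noteq> h \<and> s x}"
    unfolding conf_def by auto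
  then show ?thesis unfolding ups_def cnt_def by (simp add: card_image inj_on_def)
qed

lemma card_conf: "h < Ns \<Longrightarrow> card (conf h s) = N"
  unfolding conf_def by (simp add: card_image inj_on_def)

lemma conf_sub: "conf h s \<subseteq> {..<Ns} \<times> UNIV"
  unfolding conf_def by auto

lemma conf_cong: "(\<And>x. x < Ns \<Longrightarrow> x \<noteq> h \<Longrightarrow> s x = s' x) \<Longrightarrow> conf h s = conf h s'"
  unfolding conf_def by (auto simp: image_def)

lemma conf_flip: "x < Ns \<Longrightarrow> x \<noteq> h \<Longrightarrow> conf h (s(x:=b)) = insert (x,b) (conf h s - {(x, s x)})"
  by (auto simp: conf_def image_def)

lemma conf_move: "h < Ns \<Longrightarrow> y < Ns \<Longrightarrow> y \<noteq> h \<Longrightarrow>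
   conf y (s(h := s y)) = insert (h, s y) (conf h s - {(y, s y)})"
  by (auto simp: conf_def image_def)

lemma cnt_le: assumes "h < Ns" shows "cnt h s \<le> N"
proof -
  have "{x. x<Ns \<and> x \<noteq> h \<and> s x} \<subseteq> {..<Ns} - {h}" by auto
  then have "cnt h s \<le> card ({..<Ns} - {h})" unfolding cnt_def by (intro card_mono) auto
  also have "\<dots> \<le> N" using assms by auto
  finally show ?thesis .
qed

lemma K_conf: "h < Ns \<Longrightarrow> K F (conf h s) = F (cnt h s) * wh h"
  unfolding K_def valid_def by (auto simp: cnt_conf)

lemma K_invalid: "\<not> valid S \<Longrightarrow> K F S = 0"
  unfolding K_def by simp

lemma valid_char:
  assumes sub: "S \<subseteq> {..<Ns} \<times> UNIV" and c: "card S = N"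
    and nd: "\<forall>x. \<not> ((x,True) \<in> S \<and> (x,False) \<in> S)"
  shows "valid S"
proof -
  have fin: "finite S" using sub finite_subset by (metis finite_SigmaI finite_UNIV finite_lessThan)
  have inj: "inj_on fst S"
  proof (rule inj_onI)
    fix a b assume "a \<in> S" "b \<in> S" "fst a = fst b"
    then show "a = b" using nd by (cases a; cases b) (metis (full_types) fst_conv snd_conv)
  qed
  have cf: "card (fst ` S) = N" using card_image[OF inj] c by simp
  have fs: "fst ` S \<subseteq> {..<Ns}" using sub by auto
  have "card ({..<Ns} - fst ` S) = 1"
    using card_Diff_subset[OF finite_imageI[OF fin] fs] cf Ns2 by simp
  then obtain h where h: "{..<Ns} - fst ` S = {h}" using card_1_singletonE by blast
  define s where "s x = ((x,True) \<in> S)" for x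
  have hN: "h < Ns" using h by auto
  have "S = conf h s"
  proof (intro set_eqI iffI)
    fix m assume m: "m \<in> S"
    obtain y b where mb: "m = (y,b)" by (cases m)
    have "y \<in> fst ` S" using m mb by force
    then have "y \<noteq> h" using h by auto
    moreover have "y < Ns" using m mb sub by auto
    moreover have "b = s y" using m mb nd unfolding s_def by (cases b) auto
    ultimately show "m \<in> conf h s" using mb by simp
  next
    fix m assume m: "m \<in> conf h s"
    obtain y b where mb: "m = (y,b)" by (cases m)
    have y: "y < Ns" "y \<noteq> h" "b = s y" using m mb by auto
    then have "y \<in> fst ` S" using h by auto
    then obtain c where "(y,c) \<in> S" by force
    then show "m \<in> S" using y mb unfolding s_def by (cases c; cases b) auto
  qed
  then show ?thesis unfolding valid_def using hN by blast
qed

lemma fsign_T: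
  assumes "h < Ns" "y < Ns" "h \<noteq> y" "z = h \<or> z = y"
  shows "fsign ((\<lambda>x. (x, s x)) ` ({..<Ns} - {h, y})) (z,\<sigma>) =
           (if z = min h y then (-1)^z else (-1)^(z-1))"
proof -
  let ?T = "(\<lambda>x. (x, s x)) ` ({..<Ns} - {h, y})"
  have "{m\<in>?T. midx m < midx (z,\<sigma>)} = (\<lambda>x. (x, s x)) ` {x. x<Ns \<and> x \<noteq> h \<and> x \<noteq> y \<and> x < z}"
    using assms by (auto simp: midx_less)
  then have c: "card {m\<in>?T. midx m < midx (z,\<sigma>)} = card {x. x<Ns \<and> x \<noteq> h \<and> x \<noteq> y \<and> x < z}"
    by (simp add: card_image inj_on_def)
  show ?thesis
  proof (cases "z = min h y")
    case True
    then have "{x. x<Ns \<and> x \<noteq> h \<and> x \<noteq> y \<and> x < z} = {..<z}" using assms by auto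
    then show ?thesis using True c unfolding fsign_def by simp
  next
    case False
    define mn where "mn = min h y"
    have oz: "mn < z" "z < Ns" using False assms unfolding mn_def by auto
    have "{x. x<Ns \<and> x \<noteq> h \<and> x \<noteq> y \<and> x < z} = {..<z} - {mn}"
      using assms False oz unfolding mn_def by auto
    then show ?thesis using False c oz unfolding fsign_def by simp
  qed
qed

end


lemma m1_pred: "0 < n \<Longrightarrow> (-1::complex)^(n-1) = - ((-1)^n)"
  by (cases n) auto

context hub begin

lemma cnt_move:
  assumes "h < Ns" "y < Ns" "y \<noteq> h"
  shows "cnt y (s(h := s y)) = cnt h s"
proof (cases "s y")
  case True
  let ?A = "{x. x<Ns \<and> x \<noteq> h \<and> s x}"
  have e: "{x. x<Ns \<and> x \<noteq> y \<and> (s(h := s y)) x} = insert h (?A - {y})"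
    using assms True by auto
  have fin: "finite ?A" by simp
  have "y \<in> ?A" using assms True by simp
  then have c1: "card (?A - {y}) = card ?A - 1" "card ?A > 0"
    using fin by (auto simp: card_gt_0_iff)
  have "h \<notin> ?A - {y}" by simp
  then have "card (insert h (?A - {y})) = Suc (card (?A - {y}))" using fin by simp
  then show ?thesis unfolding cnt_def e using c1 by simp
next
  case False
  have e: "{x. x<Ns \<and> x \<noteq> y \<and> (s(h := s y)) x} = {x. x<Ns \<and> x \<noteq> h \<and> s x}"
    using assms False by auto
  then show ?thesis unfolding cnt_def by simp
qed

lemma A_conf:
  assumes hN: "h < Ns" and yN: "y < Ns" and hy: "h \<noteq> y" and nd: "nodbl \<psi>"
  shows "Aop (s y) \<psi> (conf h s - {(y, s y)}) =
     (if h < y then 1 else -1) * (wh h * \<psi> (conf y (s(h := s y))) - wh y * \<psi> (conf h s))"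
proof -
  let ?\<sigma> = "s y"
  define T where "T = (\<lambda>x. (x, s x)) ` ({..<Ns} - {h, y})"
  have T_eq: "conf h s - {(y, s y)} = T" unfolding T_def conf_def by auto
  have zero: "complex_of_real (lam z) * ann (z, ?\<sigma>) \<psi> T = 0" if z: "z \<in> {..<Ns} - {h,y}" for z
  proof (cases "s z = ?\<sigma>")
    case True
    then have "(z, ?\<sigma>) \<in> T" using z unfolding T_def by force
    then show ?thesis by (simp add: ann_def)
  next
    case False
    have "(z, s z) \<in> insert (z, ?\<sigma>) T" using z unfolding T_def by auto
    moreover have "(z, ?\<sigma>) \<in> insert (z,?\<sigma>) T" by simp
    ultimately have "(z,True) \<in> insert (z, ?\<sigma>) T \<and> (z,False) \<in> insert (z, ?\<sigma>) T"
      using False by (cases "s z") auto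
    then show ?thesis using nd[unfolded nodbl_def, rule_format, of z "insert (z, ?\<sigma>) T"]
      by (simp add: ann_def)
  qed
  have "Aop ?\<sigma> \<psi> T = (\<Sum>z\<in>{h,y}. complex_of_real (lam z) * ann (z,?\<sigma>) \<psi> T)"
    unfolding Aop_def by (rule sum.mono_neutral_right) (use zero hN yN in auto)
  also have "\<dots> = complex_of_real (lam h) * ann (h,?\<sigma>) \<psi> T + complex_of_real (lam y) * ann (y,?\<sigma>) \<psi> T"
    using hy by simp
  also have "ann (h,?\<sigma>) \<psi> T = fsign T (h,?\<sigma>) * \<psi> (conf y (s(h := s y)))"
  proof -
    have "(h,?\<sigma>) \<notin> T" unfolding T_def by auto
    moreover have "insert (h,?\<sigma>) T = conf y (s(h := s y))"
      using conf_move[OF hN yN hy[symmetric]] T_eq by simp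
    ultimately show ?thesis by (simp add: ann_def)
  qed
  also have "ann (y,?\<sigma>) \<psi> T = fsign T (y,?\<sigma>) * \<psi> (conf h s)"
  proof -
    have "(y,?\<sigma>) \<notin> T" unfolding T_def by auto
    moreover have "insert (y,?\<sigma>) T = conf h s"
      using T_eq hN yN hy by auto
    ultimately show ?thesis by (simp add: ann_def)
  qed
  finally have A: "Aop ?\<sigma> \<psi> T = complex_of_real (lam h) * (fsign T (h, ?\<sigma>) * \<psi> (conf y (s(h := s y)))) +
      complex_of_real (lam y) * (fsign T (y, ?\<sigma>) * \<psi> (conf h s))" .
  have fh: "fsign T (h,?\<sigma>) = (if h = min h y then (-1)^h else (-1)^(h-1))"
    unfolding T_def by (rule fsign_T) (use hN yN hy in auto)
  have fy: "fsign T (y,?\<sigma>) = (if y = min h y then (-1)^y else (-1)^(y-1))"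
    unfolding T_def by (rule fsign_T) (use hN yN hy in auto)
  show ?thesis
  proof (cases "h < y")
    case True
    then have "(-1::complex)^(y-1) = - ((-1)^y)"
      by (intro m1_pred) auto
    then show ?thesis using A fh fy True T_eq unfolding wh_def by (simp add: algebra_simps)
  next
    case False
    then have hy': "y < h" using hy by simp
    then have "(-1::complex)^(h-1) = - ((-1)^h)"
      by (intro m1_pred) auto
    then show ?thesis using A fh fy False hy' T_eq unfolding wh_def by (simp add: algebra_simps min_def)
  qed
qed

lemma nodbl_K: "nodbl (K F)"
  unfolding nodbl_def
proof (intro allI impI)
  fix S :: "mode set" and x :: nat assume a: "(x,True) \<in> S \<and> (x,False) \<in> S"
  show "K F S = 0"
  proof (cases "valid S")
    case True
    then obtain h s where "S = conf h s" unfolding valid_def by blast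
    with a show ?thesis by auto
  qed (simp add: K_invalid)
qed

lemma Aop_K: "Aop \<sigma> (K F) S = 0"
proof (cases "\<exists>z<Ns. (z,\<sigma>) \<notin> S \<and> valid (insert (z,\<sigma>) S)")
  case False
  then have "\<forall>z<Ns. complex_of_real (lam z) * ann (z,\<sigma>) (K F) S = 0"
    by (auto simp: ann_def K_invalid)
  then show ?thesis unfolding Aop_def by (intro sum.neutral) blast
next
  case True
  then obtain z h s where z: "z < Ns" "(z,\<sigma>) \<notin> S" and h: "h < Ns" and cs: "insert (z,\<sigma>) S = conf h s"
    unfolding valid_def by blast
  have zc: "(z,\<sigma>) \<in> conf h s" using cs by blast
  then have zh: "z \<noteq> h" and sz: "\<sigma> = s z" by auto
  have S: "S = conf h s - {(z, s z)}" using cs z(2) sz by blast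
  have "Aop \<sigma> (K F) S = (if h < z then 1 else -1) * (wh h * K F (conf z (s(h := s z))) - wh z * K F (conf h s))"
    unfolding S sz by (rule A_conf) (use h z zh nodbl_K in auto)
  also have "\<dots> = 0" using h z zh by (simp add: K_conf cnt_move)
  finally show ?thesis .
qed

end


context hub begin

lemma hop_inner:
  "(\<Sum>y<Ns. complex_of_real (t * lam x * lam y) * cre (x,\<sigma>) (ann (y,\<sigma>) \<psi>) S)
     = complex_of_real (t * lam x) * cre (x,\<sigma>) (Aop \<sigma> \<psi>) S"
proof -
  have "Aop \<sigma> \<psi> = (\<lambda>S. \<Sum>y<Ns. complex_of_real (lam y) * ann (y,\<sigma>) \<psi> S)"
    by (rule ext) (simp add: Aop_def)
  then have "cre (x,\<sigma>) (Aop \<sigma> \<psi>) S = (\<Sum>y<Ns. complex_of_real (lam y) * cre (x,\<sigma>) (ann (y,\<sigma>) \<psi>) S)"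
    using cre_lin[where m="(x,\<sigma>)" and I="{..<Ns}" and f="\<lambda>y. complex_of_real (lam y)" and \<phi>="\<lambda>y. ann (y,\<sigma>) \<psi>"]
    by simp
  then show ?thesis by (simp add: sum_distrib_left mult.assoc)
qed

lemma hop_eq:
  "(\<Sum>x<Ns. \<Sum>y<Ns. \<Sum>\<sigma>\<in>UNIV. complex_of_real (t * lam x * lam y) * cre (x,\<sigma>) (ann (y,\<sigma>) \<psi>) S)
   = (\<Sum>\<sigma>\<in>UNIV. \<Sum>x<Ns. complex_of_real (t * lam x) * cre (x,\<sigma>) (Aop \<sigma> \<psi>) S)"
proof -
  have "(\<Sum>x<Ns. \<Sum>y<Ns. \<Sum>\<sigma>\<in>UNIV. complex_of_real (t * lam x * lam y) * cre (x,\<sigma>) (ann (y,\<sigma>) \<psi>) S)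
      = (\<Sum>x<Ns. \<Sum>\<sigma>\<in>UNIV. \<Sum>y<Ns. complex_of_real (t * lam x * lam y) * cre (x,\<sigma>) (ann (y,\<sigma>) \<psi>) S)"
    by (rule sum.cong[OF refl], rule sum.swap)
  also have "\<dots> = (\<Sum>x<Ns. \<Sum>\<sigma>\<in>UNIV. complex_of_real (t * lam x) * cre (x,\<sigma>) (Aop \<sigma> \<psi>) S)"
    by (intro sum.cong refl hop_inner)
  also have "\<dots> = (\<Sum>\<sigma>\<in>UNIV. \<Sum>x<Ns. complex_of_real (t * lam x) * cre (x,\<sigma>) (Aop \<sigma> \<psi>) S)"
    by (rule sum.swap)
  finally show ?thesis .
qed

lemma num2: "num (x,True) (num (x,False) \<psi>) S = (if (x,True) \<in> S \<and> (x,False) \<in> S then \<psi> S else 0)"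
  by (simp add: num_eq)

lemma H_eq:
  "hubbardH Ns (\<lambda>x y. t * lam x * lam y) U \<psi> S =
     (\<Sum>\<sigma>\<in>UNIV. \<Sum>x<Ns. complex_of_real (t * lam x) * cre (x,\<sigma>) (Aop \<sigma> \<psi>) S)
     + complex_of_real U * (\<Sum>x<Ns. if (x,True) \<in> S \<and> (x,False) \<in> S then \<psi> S else 0)"
  unfolding hubbardH_def hop_eq num2 by simp

lemma H_zero:
  assumes "\<forall>\<sigma> S. Aop \<sigma> \<psi> S = 0" "nodbl \<psi>"
  shows "hubbardH Ns (\<lambda>x y. t * lam x * lam y) U \<psi> = (\<lambda>_. 0)"
proof (rule ext)
  fix S
  have "Aop \<sigma> \<psi> = (\<lambda>_. 0)" for \<sigma> using assms(1) by auto
  moreover have "(\<Sum>x<Ns. if (x,True) \<in> S \<and> (x,False) \<in> S then \<psi> S else 0) = 0"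
    by (intro sum.neutral) (use assms(2) in \<open>auto simp: nodbl_def\<close>)
  ultimately show "hubbardH Ns (\<lambda>x y. t * lam x * lam y) U \<psi> S = 0"
    unfolding H_eq by (simp add: cre_zero)
qed

definition MM :: "mode set" where "MM = {..<Ns} \<times> UNIV"

lemma finMM: "finite MM" unfolding MM_def by simp

lemma part1:
  "(\<Sum>S\<in>Pow MM. cnj (\<psi> S) * (\<Sum>\<sigma>\<in>UNIV. \<Sum>x<Ns. complex_of_real (t * lam x) * cre (x,\<sigma>) (Aop \<sigma> \<psi>) S))
   = complex_of_real (t * (\<Sum>\<sigma>\<in>UNIV. \<Sum>S\<in>Pow MM. (cmod (Aop \<sigma> \<psi> S))^2))"
proof -
  have "(\<Sum>S\<in>Pow MM. cnj (\<psi> S) * (\<Sum>\<sigma>\<in>UNIV. \<Sum>x<Ns. complex_of_real (t * lam x) * cre (x,\<sigma>) (Aop \<sigma> \<psi>) S))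
      = (\<Sum>S\<in>Pow MM. \<Sum>\<sigma>\<in>UNIV. \<Sum>x<Ns. complex_of_real (t * lam x) * (cnj (\<psi> S) * cre (x,\<sigma>) (Aop \<sigma> \<psi>) S))"
    by (simp add: sum_distrib_left mult.left_commute)
  also have "\<dots> = (\<Sum>\<sigma>\<in>UNIV. \<Sum>S\<in>Pow MM. \<Sum>x<Ns. complex_of_real (t * lam x) * (cnj (\<psi> S) * cre (x,\<sigma>) (Aop \<sigma> \<psi>) S))"
    by (rule sum.swap)
  also have "\<dots> = (\<Sum>\<sigma>\<in>UNIV. \<Sum>x<Ns. \<Sum>S\<in>Pow MM. complex_of_real (t * lam x) * (cnj (\<psi> S) * cre (x,\<sigma>) (Aop \<sigma> \<psi>) S))"
    by (rule sum.cong[OF refl], rule sum.swap)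
  also have "\<dots> = (\<Sum>\<sigma>\<in>UNIV. \<Sum>x<Ns. complex_of_real (t * lam x) * (\<Sum>S\<in>Pow MM. cnj (\<psi> S) * cre (x,\<sigma>) (Aop \<sigma> \<psi>) S))"
    by (simp add: sum_distrib_left)
  also have "\<dots> = (\<Sum>\<sigma>\<in>UNIV. \<Sum>x<Ns. complex_of_real (t * lam x) * (\<Sum>S\<in>Pow MM. cnj (ann (x,\<sigma>) \<psi> S) * Aop \<sigma> \<psi> S))"
  proof (intro sum.cong refl)
    fix \<sigma> x assume "x \<in> {..<Ns}"
    then have "(x,\<sigma>) \<in> MM" unfolding MM_def by auto
    then show "complex_of_real (t * lam x) * (\<Sum>S\<in>Pow MM. cnj (\<psi> S) * cre (x,\<sigma>) (Aop \<sigma> \<psi>) S)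
       = complex_of_real (t * lam x) * (\<Sum>S\<in>Pow MM. cnj (ann (x,\<sigma>) \<psi> S) * Aop \<sigma> \<psi> S)"
      using adjoint[OF _ finMM] by simp
  qed
  also have "\<dots> = (\<Sum>\<sigma>\<in>UNIV. \<Sum>S\<in>Pow MM. \<Sum>x<Ns. complex_of_real (t * lam x) * (cnj (ann (x,\<sigma>) \<psi> S) * Aop \<sigma> \<psi> S))"
    by (simp add: sum_distrib_left sum.swap[of _ "{..<Ns}"])
  also have "\<dots> = (\<Sum>\<sigma>\<in>UNIV. \<Sum>S\<in>Pow MM. complex_of_real t * (cnj (Aop \<sigma> \<psi> S) * Aop \<sigma> \<psi> S))"
  proof (intro sum.cong refl)
    fix \<sigma> S
    have "cnj (Aop \<sigma> \<psi> S) = (\<Sum>x<Ns. complex_of_real (lam x) * cnj (ann (x,\<sigma>) \<psi> S))"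
      unfolding Aop_def by simp
    then show "(\<Sum>x<Ns. complex_of_real (t * lam x) * (cnj (ann (x,\<sigma>) \<psi> S) * Aop \<sigma> \<psi> S))
        = complex_of_real t * (cnj (Aop \<sigma> \<psi> S) * Aop \<sigma> \<psi> S)"
      by (simp add: sum_distrib_left sum_distrib_right mult_ac)
  qed
  also have "\<dots> = (\<Sum>\<sigma>\<in>UNIV. \<Sum>S\<in>Pow MM. complex_of_real (t * (cmod (Aop \<sigma> \<psi> S))^2))"
    by (intro sum.cong refl) (metis (no_types, lifting) complex_norm_square mult.commute of_real_mult)
  also have "\<dots> = complex_of_real (t * (\<Sum>\<sigma>\<in>UNIV. \<Sum>S\<in>Pow MM. (cmod (Aop \<sigma> \<psi> S))^2))"
    by (simp add: sum_distrib_left)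
  finally show ?thesis .
qed

lemma part2:
  "(\<Sum>S\<in>Pow MM. cnj (\<psi> S) * (complex_of_real U * (\<Sum>x<Ns. if (x,True) \<in> S \<and> (x,False) \<in> S then \<psi> S else 0)))
   = complex_of_real (U * (\<Sum>x<Ns. \<Sum>S\<in>Pow MM. if (x,True) \<in> S \<and> (x,False) \<in> S then (cmod (\<psi> S))^2 else 0))"
proof -
  have "(\<Sum>S\<in>Pow MM. cnj (\<psi> S) * (complex_of_real U * (\<Sum>x<Ns. if (x,True) \<in> S \<and> (x,False) \<in> S then \<psi> S else 0)))
    = (\<Sum>S\<in>Pow MM. \<Sum>x<Ns. complex_of_real U * (if (x,True) \<in> S \<and> (x,False) \<in> S then complex_of_real ((cmod (\<psi> S))^2) else 0))"
  proof (intro sum.cong refl)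
    fix S
    have e: "cnj (\<psi> S) * (if c then \<psi> S else 0) = (if c then complex_of_real ((cmod (\<psi> S))^2) else 0)" for c
      using complex_norm_square[of "\<psi> S"] by (simp add: mult.commute)
    show "cnj (\<psi> S) * (complex_of_real U * (\<Sum>x<Ns. if (x,True) \<in> S \<and> (x,False) \<in> S then \<psi> S else 0))
      = (\<Sum>x<Ns. complex_of_real U * (if (x,True) \<in> S \<and> (x,False) \<in> S then complex_of_real ((cmod (\<psi> S))^2) else 0))"
      by (simp add: sum_distrib_left e mult.left_commute)
  qed
  also have "\<dots> = (\<Sum>x<Ns. \<Sum>S\<in>Pow MM. complex_of_real U * (if (x,True) \<in> S \<and> (x,False) \<in> S then complex_of_real ((cmod (\<psi> S))^2) else 0))"
    by (rule sum.swap)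
  also have "\<dots> = complex_of_real (U * (\<Sum>x<Ns. \<Sum>S\<in>Pow MM. if (x,True) \<in> S \<and> (x,False) \<in> S then (cmod (\<psi> S))^2 else 0))"
    unfolding of_real_mult of_real_sum sum_distrib_left by (intro sum.cong refl) auto
  finally show ?thesis .
qed

lemma quad:
  "(\<Sum>S\<in>Pow MM. cnj (\<psi> S) * hubbardH Ns (\<lambda>x y. t * lam x * lam y) U \<psi> S)
   = complex_of_real (t * (\<Sum>\<sigma>\<in>UNIV. \<Sum>S\<in>Pow MM. (cmod (Aop \<sigma> \<psi> S))^2)
      + U * (\<Sum>x<Ns. \<Sum>S\<in>Pow MM. if (x,True) \<in> S \<and> (x,False) \<in> S then (cmod (\<psi> S))^2 else 0))"
  unfolding H_eq distrib_left sum.distrib part1 part2 by simp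

end


context hub begin

lemma Hspace_sub: "\<psi> \<in> Hspace Ns Ne \<Longrightarrow> \<psi> S \<noteq> 0 \<Longrightarrow> S \<in> Pow MM"
  unfolding Hspace_def MM_def by auto

lemma E_nonneg:
  assumes t: "t > 0" and U: "U > 0" and H: "\<psi> \<in> Hspace Ns Ne" and S0: "\<psi> S0 \<noteq> 0"
    and eig: "hubbardH Ns (\<lambda>x y. t * lam x * lam y) U \<psi> = (\<lambda>S. complex_of_real E * \<psi> S)"
  shows "E \<ge> 0"
proof -
  define R where "R = t * (\<Sum>\<sigma>\<in>UNIV. \<Sum>S\<in>Pow MM. (cmod (Aop \<sigma> \<psi> S))^2)
      + U * (\<Sum>x<Ns. \<Sum>S\<in>Pow MM. if (x,True) \<in> S \<and> (x,False) \<in> S then (cmod (\<psi> S))^2 else 0)"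
  have R0: "R \<ge> 0" unfolding R_def using t U
    by (intro add_nonneg_nonneg mult_nonneg_nonneg sum_nonneg) auto
  have e1: "(\<Sum>S\<in>Pow MM. cnj (\<psi> S) * (complex_of_real E * \<psi> S)) = complex_of_real R"
    using quad[of \<psi> t U] eig unfolding R_def by simp
  have e2: "(\<Sum>S\<in>Pow MM. cnj (\<psi> S) * (complex_of_real E * \<psi> S))
      = complex_of_real (E * (\<Sum>S\<in>Pow MM. (cmod (\<psi> S))^2))"
    unfolding of_real_mult of_real_sum sum_distrib_left
    by (intro sum.cong refl) (metis (no_types, lifting) complex_norm_square mult.commute mult.left_commute)
  have "complex_of_real (E * (\<Sum>S\<in>Pow MM. (cmod (\<psi> S))^2)) = complex_of_real R"
    using e2[symmetric] e1 by (rule trans)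
  then have eq: "E * (\<Sum>S\<in>Pow MM. (cmod (\<psi> S))^2) = R" using of_real_eq_iff by blast
  have "(\<Sum>S\<in>Pow MM. (cmod (\<psi> S))^2) > 0"
    by (rule sum_pos2[of _ S0]) (use finMM Hspace_sub[OF H S0] S0 in auto)
  then show ?thesis using eq R0 by (meson zero_le_mult_iff not_less)
qed

lemma ground_char:
  assumes t: "t > 0" and U: "U > 0" and H: "\<psi> \<in> Hspace Ns Ne"
    and eig: "hubbardH Ns (\<lambda>x y. t * lam x * lam y) U \<psi> = (\<lambda>S. 0)"
  shows "\<forall>\<sigma> S. Aop \<sigma> \<psi> S = 0" and "nodbl \<psi>"
proof -
  define A where "A = (\<Sum>\<sigma>\<in>UNIV. \<Sum>S\<in>Pow MM. (cmod (Aop \<sigma> \<psi> S))^2)"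
  define B where "B = (\<Sum>x<Ns. \<Sum>S\<in>Pow MM. if (x,True) \<in> S \<and> (x,False) \<in> S then (cmod (\<psi> S))^2 else 0)"
  have A0: "A \<ge> 0" unfolding A_def by (intro sum_nonneg) auto
  have B0: "B \<ge> 0" unfolding B_def by (intro sum_nonneg) auto
  have "complex_of_real (t * A + U * B) = 0"
    using quad[of \<psi> t U] eig unfolding A_def B_def by simp
  then have "t * A + U * B = 0" by (simp only: of_real_eq_0_iff)
  then have "A = 0" "B = 0" using A0 B0 t U
    by (smt (verit) mult_nonneg_nonneg mult_pos_pos)+
  have fin: "finite (Pow MM)" using finMM by simp
  have Az: "Aop \<sigma> \<psi> S = 0" if "S \<in> Pow MM" for \<sigma> S
  proof -
    have "\<forall>\<sigma>\<in>UNIV. (\<Sum>S\<in>Pow MM. (cmod (Aop \<sigma> \<psi> S))^2) = 0"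
      using \<open>A = 0\<close> unfolding A_def by (subst (asm) sum_nonneg_eq_0_iff) (auto intro: sum_nonneg)
    then have "\<forall>S\<in>Pow MM. (cmod (Aop \<sigma> \<psi> S))^2 = 0"
      using fin by (subst (asm) sum_nonneg_eq_0_iff) auto
    then show ?thesis using that by auto
  qed
  show "\<forall>\<sigma> S. Aop \<sigma> \<psi> S = 0"
  proof (intro allI)
    fix \<sigma> S
    show "Aop \<sigma> \<psi> S = 0"
    proof (cases "S \<in> Pow MM")
      case True then show ?thesis by (rule Az)
    next
      case False
      have "ann (y,\<sigma>) \<psi> S = 0" for y
      proof -
        have "insert (y,\<sigma>) S \<notin> Pow MM" using False by auto
        then have "\<psi> (insert (y,\<sigma>) S) = 0" using Hspace_sub[OF H] by blast
        then show ?thesis by (simp add: ann_def)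
      qed
      then show ?thesis unfolding Aop_def by simp
    qed
  qed
  show "nodbl \<psi>" unfolding nodbl_def
  proof (intro allI impI)
    fix S :: "mode set" and x :: nat
    assume d: "(x,True) \<in> S \<and> (x,False) \<in> S"
    show "\<psi> S = 0"
    proof (cases "S \<in> Pow MM")
      case False then show ?thesis using Hspace_sub[OF H] by blast
    next
      case True
      then have xN: "x < Ns" using d unfolding MM_def by auto
      have "\<forall>x\<in>{..<Ns}. (\<Sum>S\<in>Pow MM. if (x,True) \<in> S \<and> (x,False) \<in> S then (cmod (\<psi> S))^2 else 0) = 0"
        using \<open>B = 0\<close> unfolding B_def by (subst (asm) sum_nonneg_eq_0_iff) (auto intro: sum_nonneg)
      then have "(\<Sum>S\<in>Pow MM. if (x,True) \<in> S \<and> (x,False) \<in> S then (cmod (\<psi> S))^2 else 0) = 0"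
        using xN by auto
      then have "\<forall>S\<in>Pow MM. (if (x,True) \<in> S \<and> (x,False) \<in> S then (cmod (\<psi> S))^2 else 0) = 0"
        using fin by (subst (asm) sum_nonneg_eq_0_iff) auto
      then have "(if (x,True) \<in> S \<and> (x,False) \<in> S then (cmod (\<psi> S))^2 else 0) = 0" using True by blast
      then show ?thesis using d by simp
    qed
  qed
qed

definition G :: "fvec \<Rightarrow> nat \<Rightarrow> (nat \<Rightarrow> bool) \<Rightarrow> complex" where
  "G \<psi> h s = \<psi> (conf h s) / wh h"

lemma G_move:
  assumes A: "\<forall>\<sigma> S. Aop \<sigma> \<psi> S = 0" and nd: "nodbl \<psi>"
    and hN: "h < Ns" and yN: "y < Ns" and hy: "h \<noteq> y"
  shows "G \<psi> y (s(h := s y)) = G \<psi> h s"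
proof -
  have "(if h < y then 1 else -1) * (wh h * \<psi> (conf y (s(h := s y))) - wh y * \<psi> (conf h s)) = (0::complex)"
    using A_conf[OF hN yN hy nd, of s] A by simp
  then have "wh h * \<psi> (conf y (s(h := s y))) = wh y * \<psi> (conf h s)"
    by (cases "h < y") auto
  then show ?thesis unfolding G_def using wh_nz[OF hN] wh_nz[OF yN]
    by (simp add: field_simps)
qed

lemma G_cong: "(\<And>x. x < Ns \<Longrightarrow> x \<noteq> h \<Longrightarrow> s x = s' x) \<Longrightarrow> G \<psi> h s = G \<psi> h s'"
  unfolding G_def using conf_cong by metis

lemma G_swap:
  assumes A: "\<forall>\<sigma> S. Aop \<sigma> \<psi> S = 0" and nd: "nodbl \<psi>"
    and N: "h < Ns" "a < Ns" "b < Ns" and d: "h \<noteq> a" "h \<noteq> b" "a \<noteq> b"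
  shows "G \<psi> h (s(a := s b, b := s a)) = G \<psi> h s"
proof -
  define s1 where "s1 = s(h := s a)"
  have 1: "G \<psi> a s1 = G \<psi> h s" unfolding s1_def by (rule G_move[OF A nd]) (use N d in auto)
  define s2 where "s2 = s1(a := s1 b)"
  have 2: "G \<psi> b s2 = G \<psi> a s1" unfolding s2_def by (rule G_move[OF A nd]) (use N d in auto)
  define s3 where "s3 = s2(b := s2 h)"
  have 3: "G \<psi> h s3 = G \<psi> b s2" unfolding s3_def by (rule G_move[OF A nd]) (use N d in auto)
  have "G \<psi> h (s(a := s b, b := s a)) = G \<psi> h s3"
    by (rule G_cong) (use d in \<open>auto simp: s3_def s2_def s1_def\<close>)
  then show ?thesis using 1 2 3 by simp
qed

lemma G_same_hole_n:
  assumes A: "\<forall>\<sigma> S. Aop \<sigma> \<psi> S = 0" and nd: "nodbl \<psi>" and hN: "h < Ns"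
  shows "\<forall>s. card ({x. x<Ns \<and> x \<noteq> h \<and> s x} - {x. x<Ns \<and> x \<noteq> h \<and> s' x}) = n
      \<longrightarrow> cnt h s = cnt h s' \<longrightarrow> G \<psi> h s = G \<psi> h s'"
proof (induction n rule: less_induct)
  case (less n)
  show ?case
  proof (intro allI impI)
    fix s
    let ?A = "{x. x<Ns \<and> x \<noteq> h \<and> s x}" and ?B = "{x. x<Ns \<and> x \<noteq> h \<and> s' x}"
    assume n: "card (?A - ?B) = n" and c: "cnt h s = cnt h s'"
    have cAB: "card ?A = card ?B" using c unfolding cnt_def .
    have finA: "finite ?A" and finB: "finite ?B" by auto
    show "G \<psi> h s = G \<psi> h s'"
    proof (cases "?A - ?B = {}")
      case True
      then have "?A \<subseteq> ?B" by blast
      then have "?A = ?B" using card_subset_eq[OF finB _ cAB] by blast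
      then have "s x = s' x" if "x < Ns" "x \<noteq> h" for x using that by blast
      then show ?thesis by (rule G_cong)
    next
      case False
      then obtain x where x: "x \<in> ?A - ?B" by blast
      have "?B - ?A \<noteq> {}"
      proof
        assume "?B - ?A = {}"
        then have "?B \<subseteq> ?A" by blast
        then have "?B = ?A" using card_subset_eq[OF finA _ cAB[symmetric]] by blast
        then show False using x by blast
      qed
      then obtain y where y: "y \<in> ?B - ?A" by blast
      define s2 where "s2 = s(x := s y, y := s x)"
      have xy: "x \<noteq> y" using x y by blast
      have g: "G \<psi> h s2 = G \<psi> h s" unfolding s2_def
        by (rule G_swap[OF A nd]) (use x y hN xy in auto)
      have A2: "{x. x<Ns \<and> x \<noteq> h \<and> s2 x} = insert y (?A - {x})"
        using x y xy unfolding s2_def by auto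
      have D2: "{x. x<Ns \<and> x \<noteq> h \<and> s2 x} - ?B = (?A - ?B) - {x}"
        using x y xy unfolding s2_def by auto
      have "card ((?A - ?B) - {x}) < card (?A - ?B)"
        by (rule card_Diff1_less) (use x finA in auto)
      then have lt: "card ((?A - ?B) - {x}) < n" using n by simp
      have cs2: "cnt h s2 = cnt h s'"
      proof -
        have yA: "y \<notin> ?A - {x}" using y by blast
        have c1: "card (?A - {x}) = card ?A - 1" using x finA by (simp add: card_Diff_singleton)
        have c2: "card ?A > 0" using x finA card_gt_0_iff by blast
        have "card (insert y (?A - {x})) = Suc (card (?A - {x}))" using yA finA by simp
        then have "card (insert y (?A - {x})) = card ?A" using c1 c2 by simp
        then show ?thesis using c A2 unfolding cnt_def by simp
      qed
      have "G \<psi> h s2 = G \<psi> h s'"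
        using less.IH[OF lt, rule_format, of s2] D2 cs2 by simp
      then show ?thesis using g by simp
    qed
  qed
qed

lemma G_const:
  assumes A: "\<forall>\<sigma> S. Aop \<sigma> \<psi> S = 0" and nd: "nodbl \<psi>" and hN: "h < Ns" and hN': "h' < Ns"
    and c: "cnt h s = cnt h' s'"
  shows "G \<psi> h s = G \<psi> h' s'"
proof (cases "h = h'")
  case True
  then show ?thesis using G_same_hole_n[OF A nd hN, of s'] c by blast
next
  case False
  have 1: "G \<psi> h' (s(h := s h')) = G \<psi> h s" by (rule G_move[OF A nd hN hN' False])
  have "cnt h' (s(h := s h')) = cnt h s" by (rule cnt_move) (use hN hN' False in auto)
  then have "G \<psi> h' (s(h := s h')) = G \<psi> h' s'"
    using G_same_hole_n[OF A nd hN', of s' "card ({x. x<Ns \<and> x \<noteq> h' \<and> (s(h := s h')) x} - {x. x<Ns \<and> x \<noteq> h' \<and> s' x})"] c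
    by auto
  then show ?thesis using 1 by simp
qed

lemma cnt_canon: "c \<le> N \<Longrightarrow> cnt N (\<lambda>x. x < c) = c"
proof -
  assume c: "c \<le> N"
  have "{x. x<Ns \<and> x \<noteq> N \<and> x < c} = {..<c}" using c Ns2 by auto
  then show ?thesis unfolding cnt_def by simp
qed

lemma ground_is_K:
  assumes H: "\<psi> \<in> Hspace Ns N" and A: "\<forall>\<sigma> S. Aop \<sigma> \<psi> S = 0" and nd: "nodbl \<psi>"
  shows "\<psi> = K (\<lambda>u. G \<psi> N (\<lambda>x. x < u))"
proof (rule ext)
  fix S
  show "\<psi> S = K (\<lambda>u. G \<psi> N (\<lambda>x. x < u)) S"
  proof (cases "valid S")
    case True
    then obtain h s where h: "h < Ns" and S: "S = conf h s" unfolding valid_def by blast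
    have NN: "N < Ns" using Ns2 by simp
    have "G \<psi> N (\<lambda>x. x < cnt h s) = G \<psi> h s"
      by (rule G_const[OF A nd NN h]) (rule cnt_canon[OF cnt_le[OF h]])
    then show ?thesis unfolding S K_conf[OF h] G_def using wh_nz[OF h] by simp
  next
    case False
    have "\<psi> S = 0"
    proof (rule ccontr)
      assume "\<psi> S \<noteq> 0"
      then have "S \<subseteq> {..<Ns} \<times> UNIV" "card S = N" using H unfolding Hspace_def by auto
      moreover have "\<forall>x. \<not> ((x,True) \<in> S \<and> (x,False) \<in> S)" using nd \<open>\<psi> S \<noteq> 0\<close> unfolding nodbl_def by blast
      ultimately have "valid S" by (rule valid_char)
      then show False using False by simp
    qed
    then show ?thesis using False by (simp add: K_invalid)
  qed
qed

end


definition F1 :: "nat \<Rightarrow> (nat \<Rightarrow> complex) \<Rightarrow> nat \<Rightarrow> complex" where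
  "F1 n F u = 1/2 * (of_nat u * F (u - 1) + of_nat (n - u) * F (u + 1))"
definition F2 :: "nat \<Rightarrow> (nat \<Rightarrow> complex) \<Rightarrow> nat \<Rightarrow> complex" where
  "F2 n F u = 1/2 * (- \<i> * (of_nat u * F (u - 1)) + \<i> * (of_nat (n - u) * F (u + 1)))"
definition F3 :: "nat \<Rightarrow> (nat \<Rightarrow> complex) \<Rightarrow> nat \<Rightarrow> complex" where
  "F3 n F u = 1/2 * (of_nat u * F u - of_nat (n - u) * F u)"

lemma spin_alg:
  assumes "u \<le> n"
  shows "F1 n (F1 n F) u + F2 n (F2 n F) u + F3 n (F3 n F) u
     = complex_of_real (real n / 2 * (real n / 2 + 1)) * F u"
proof -
  obtain d where d: "n = u + d" using assms le_Suc_ex by blast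
  show ?thesis
  proof (cases u)
    case 0
    show ?thesis
    proof (cases d)
      case 0 then show ?thesis using d \<open>u = 0\<close> by (simp add: F1_def F2_def F3_def)
    next
      case (Suc e)
      then show ?thesis using d \<open>u = 0\<close>
        by (simp add: F1_def F2_def F3_def algebra_simps) (simp add: field_simps power2_eq_square)
    qed
  next
    case (Suc v)
    show ?thesis
    proof (cases d)
      case 0 then show ?thesis using d Suc
        by (simp add: F1_def F2_def F3_def algebra_simps) (simp add: field_simps power2_eq_square)
    next
      case (Suc e)
      then show ?thesis using d \<open>u = Suc v\<close>
        by (simp add: F1_def F2_def F3_def algebra_simps) (simp add: field_simps power2_eq_square)
    qed
  qed
qed

lemma sum_if_const: "(\<Sum>x\<in>A. if P x then c else 0) = of_nat (card {x\<in>A. P x}) * (c::complex)" if "finite A"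
  using that by (simp add: sum.inter_filter[symmetric])

context hub begin

definition Pop :: "fvec \<Rightarrow> fvec" where "Pop \<psi> S = (\<Sum>x<Ns. cre (x,True) (ann (x,False) \<psi>) S)"
definition Mop :: "fvec \<Rightarrow> fvec" where "Mop \<psi> S = (\<Sum>x<Ns. cre (x,False) (ann (x,True) \<psi>) S)"
definition nUop :: "fvec \<Rightarrow> fvec" where "nUop \<psi> S = (\<Sum>x<Ns. cre (x,True) (ann (x,True) \<psi>) S)"
definition nDop :: "fvec \<Rightarrow> fvec" where "nDop \<psi> S = (\<Sum>x<Ns. cre (x,False) (ann (x,False) \<psi>) S)"

lemma Stot_123:
  "Stot Ns 1 \<psi> = (\<lambda>S. 1/2 * (Pop \<psi> S + Mop \<psi> S))"
  "Stot Ns 2 \<psi> = (\<lambda>S. 1/2 * (- \<i> * Pop \<psi> S + \<i> * Mop \<psi> S))"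
  "Stot Ns 3 \<psi> = (\<lambda>S. 1/2 * (nUop \<psi> S - nDop \<psi> S))"
  by (auto simp: Stot_def pauli_def UNIV_bool Pop_def Mop_def nUop_def nDop_def sum.distrib
      sum_distrib_left sum_subtractf sum_negf algebra_simps fun_eq_iff)

lemma cnt_compl: assumes "h < Ns" shows "card {x. x<Ns \<and> x \<noteq> h \<and> \<not> s x} = N - cnt h s"
proof -
  have u: "{x. x<Ns \<and> x \<noteq> h \<and> \<not> s x} \<union> {x. x<Ns \<and> x \<noteq> h \<and> s x} = {..<Ns} - {h}" by auto
  have "card ({x. x<Ns \<and> x \<noteq> h \<and> \<not> s x} \<union> {x. x<Ns \<and> x \<noteq> h \<and> s x})
     = card {x. x<Ns \<and> x \<noteq> h \<and> \<not> s x} + card {x. x<Ns \<and> x \<noteq> h \<and> s x}"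
    by (rule card_Un_disjoint) auto
  then show ?thesis using u assms unfolding cnt_def by simp
qed

lemma cnt_flip:
  assumes "x < Ns" "x \<noteq> h"
  shows "cnt h (s(x := b)) = (if b then (if s x then cnt h s else cnt h s + 1) else (if s x then cnt h s - 1 else cnt h s))"
proof -
  let ?A = "{z. z<Ns \<and> z \<noteq> h \<and> s z}"
  have fin: "finite ?A" by simp
  show ?thesis
  proof (cases b)
    case True
    have e: "{z. z<Ns \<and> z \<noteq> h \<and> (s(x := b)) z} = insert x ?A" using True assms by auto
    show ?thesis using True fin assms unfolding cnt_def e by (auto simp: insert_absorb)
  next
    case False
    have e: "{z. z<Ns \<and> z \<noteq> h \<and> (s(x := b)) z} = ?A - {x}" using False assms by auto
    show ?thesis using False fin assms unfolding cnt_def e by (auto simp: card_Diff_singleton)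
  qed
qed

lemma flip_term:
  assumes "c \<noteq> b"
  shows "cre (x, c) (ann (x, b) (K F)) S =
    (if valid S \<and> (x,c) \<in> S then K F (insert (x,b) (S - {(x,c)})) else 0)"
proof -
  have cb: "(x,b) \<notin> S - {(x,c)} \<longleftrightarrow> (x,b) \<notin> S" using assms by auto
  show ?thesis
  proof (cases "valid S")
    case True
    then obtain h s where "S = conf h s" unfolding valid_def by blast
    then show ?thesis unfolding cre_ann using True assms by auto
  next
    case False
    have "K F (insert (x,b) (S - {(x,c)})) = 0" if xc: "(x,c) \<in> S" and xb: "(x,b) \<notin> S"
    proof (rule K_invalid, rule notI)
      assume "valid (insert (x,b) (S - {(x,c)}))"
      then obtain h s' where h: "h < Ns" and e: "insert (x,b) (S - {(x,c)}) = conf h s'" unfolding valid_def by blast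
      have "(x,b) \<in> conf h s'" using e by blast
      then have xh: "x < Ns" "x \<noteq> h" "s' x = b" by auto
      have "conf h (s'(x := c)) = insert (x,c) (conf h s' - {(x, s' x)})" by (rule conf_flip[OF xh(1,2)])
      also have "conf h s' - {(x, s' x)} = S - {(x,c)}" using e xh(3) xb assms by blast
      also have "insert (x,c) (S - {(x,c)}) = S" using xc by blast
      finally have "valid S" unfolding valid_def using h by blast
      then show False using False by simp
    qed
    then show ?thesis unfolding cre_ann using False cb by auto
  qed
qed

lemma K_flip:
  assumes h: "h < Ns" and x: "x < Ns" "x \<noteq> h" and c: "c = s x" "c \<noteq> b"
  shows "K F (insert (x,b) (conf h s - {(x,c)})) = F (cnt h (s(x := b))) * wh h"
proof -
  have "insert (x,b) (conf h s - {(x,c)}) = conf h (s(x := b))" using conf_flip[OF x, of s b] c(1) by simp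
  then show ?thesis using K_conf[OF h] by simp
qed

lemma TF: "True \<noteq> False" "False \<noteq> True" by simp_all

lemma count_if: "(\<Sum>x<Ns. if x \<noteq> h \<and> P x then c else 0) = of_nat (card {x. x<Ns \<and> x \<noteq> h \<and> P x}) * (c::complex)"
proof -
  have "{x\<in>{..<Ns}. x \<noteq> h \<and> P x} = {x. x<Ns \<and> x \<noteq> h \<and> P x}" by auto
  then show ?thesis by (simp add: sum_if_const)
qed

lemma Pop_K: "Pop (K F) = K (\<lambda>u. of_nat u * F (u - 1))"
proof (rule ext)
  fix S
  show "Pop (K F) S = K (\<lambda>u. of_nat u * F (u - 1)) S"
  proof (cases "valid S")
    case vS: True
    then obtain h s where h: "h < Ns" and S: "S = conf h s" unfolding valid_def by blast
    have "Pop (K F) S = (\<Sum>x<Ns. if x \<noteq> h \<and> s x then F (cnt h s - 1) * wh h else 0)"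
      unfolding Pop_def
    proof (intro sum.cong refl)
      fix x assume xN: "x \<in> {..<Ns}"
      show "cre (x, True) (ann (x, False) (K F)) S = (if x \<noteq> h \<and> s x then F (cnt h s - 1) * wh h else 0)"
      proof (cases "x \<noteq> h \<and> s x")
        case True
        then have "K F (insert (x,False) (conf h s - {(x,True)})) = F (cnt h (s(x:=False))) * wh h"
          by (intro K_flip) (use h xN in auto)
        then show ?thesis unfolding flip_term[OF TF(1)] S using True xN h vS S by (simp add: cnt_flip)
      next
        case False
        then show ?thesis unfolding flip_term[OF TF(1)] S by auto
      qed
    qed
    also have "\<dots> = of_nat (cnt h s) * (F (cnt h s - 1) * wh h)"
      unfolding count_if cnt_def ..
    finally show ?thesis unfolding S K_conf[OF h] by simp
  next
    case False
    then show ?thesis unfolding Pop_def by (simp add: flip_term[OF TF(1)] K_invalid)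
  qed
qed

lemma Mop_K: "Mop (K F) = K (\<lambda>u. of_nat (N - u) * F (u + 1))"
proof (rule ext)
  fix S
  show "Mop (K F) S = K (\<lambda>u. of_nat (N - u) * F (u + 1)) S"
  proof (cases "valid S")
    case vS: True
    then obtain h s where h: "h < Ns" and S: "S = conf h s" unfolding valid_def by blast
    have "Mop (K F) S = (\<Sum>x<Ns. if x \<noteq> h \<and> \<not> s x then F (cnt h s + 1) * wh h else 0)"
      unfolding Mop_def
    proof (intro sum.cong refl)
      fix x assume xN: "x \<in> {..<Ns}"
      show "cre (x, False) (ann (x, True) (K F)) S = (if x \<noteq> h \<and> \<not> s x then F (cnt h s + 1) * wh h else 0)"
      proof (cases "x \<noteq> h \<and> \<not> s x")
        case True
        then have "K F (insert (x,True) (conf h s - {(x,False)})) = F (cnt h (s(x:=True))) * wh h"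
          by (intro K_flip) (use h xN in auto)
        then show ?thesis unfolding flip_term[OF TF(2)] S using True xN h vS S by (simp add: cnt_flip)
      next
        case False
        then show ?thesis unfolding flip_term[OF TF(2)] S by auto
      qed
    qed
    also have "\<dots> = of_nat (N - cnt h s) * (F (cnt h s + 1) * wh h)"
      unfolding count_if cnt_compl[OF h] ..
    finally show ?thesis unfolding S K_conf[OF h] by simp
  next
    case False
    then show ?thesis unfolding Mop_def by (simp add: flip_term[OF TF(2)] K_invalid)
  qed
qed

lemma num_term: "cre (x,\<sigma>) (ann (x,\<sigma>) \<psi>) S = (if (x,\<sigma>) \<in> S then \<psi> S else 0)"
  using num_eq[unfolded num_def] .

lemma nUop_K: "nUop (K F) = K (\<lambda>u. of_nat u * F u)"
proof (rule ext)
  fix S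
  show "nUop (K F) S = K (\<lambda>u. of_nat u * F u) S"
  proof (cases "valid S")
    case True
    then obtain h s where h: "h < Ns" and S: "S = conf h s" unfolding valid_def by blast
    have "nUop (K F) S = (\<Sum>x<Ns. if x \<noteq> h \<and> s x then K F S else 0)"
      unfolding nUop_def num_term by (intro sum.cong refl) (auto simp: S)
    also have "\<dots> = of_nat (cnt h s) * K F S" unfolding count_if cnt_def ..
    finally show ?thesis unfolding S K_conf[OF h] by simp
  next
    case False
    have z: "K G S = 0" for G by (rule K_invalid[OF False])
    show ?thesis unfolding nUop_def num_term z by simp
  qed
qed

lemma nDop_K: "nDop (K F) = K (\<lambda>u. of_nat (N - u) * F u)"
proof (rule ext)
  fix S
  show "nDop (K F) S = K (\<lambda>u. of_nat (N - u) * F u) S"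
  proof (cases "valid S")
    case True
    then obtain h s where h: "h < Ns" and S: "S = conf h s" unfolding valid_def by blast
    have "nDop (K F) S = (\<Sum>x<Ns. if x \<noteq> h \<and> \<not> s x then K F S else 0)"
      unfolding nDop_def num_term by (intro sum.cong refl) (auto simp: S)
    also have "\<dots> = of_nat (N - cnt h s) * K F S" unfolding count_if cnt_compl[OF h] ..
    finally show ?thesis unfolding S K_conf[OF h] by simp
  next
    case False
    have z: "K G S = 0" for G by (rule K_invalid[OF False])
    show ?thesis unfolding nDop_def num_term z by simp
  qed
qed

lemma Stot_K:
  "Stot Ns 1 (K F) = K (F1 N F)"
  "Stot Ns 2 (K F) = K (F2 N F)"
  "Stot Ns 3 (K F) = K (F3 N F)"
  unfolding Stot_123 Pop_K Mop_K nUop_K nDop_K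
  by (auto simp: fun_eq_iff K_def F1_def F2_def F3_def algebra_simps)

lemma Stot2_K: "Stot2 Ns (K F) = (\<lambda>S. complex_of_real (real N / 2 * (real N / 2 + 1)) * K F S)"
proof (rule ext)
  fix S
  have e: "Stot2 Ns \<psi> S = Stot Ns 1 (Stot Ns 1 \<psi>) S + Stot Ns 2 (Stot Ns 2 \<psi>) S + Stot Ns 3 (Stot Ns 3 \<psi>) S" for \<psi>
    unfolding Stot2_def by (simp add: add.assoc)
  have "Stot2 Ns (K F) S = K (F1 N (F1 N F)) S + K (F2 N (F2 N F)) S + K (F3 N (F3 N F)) S"
    unfolding e Stot_K ..
  also have "\<dots> = complex_of_real (real N / 2 * (real N / 2 + 1)) * K F S"
  proof (cases "valid S")
    case True
    then obtain h s where h: "h < Ns" and S: "S = conf h s" unfolding valid_def by blast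
    have sa: "F1 N (F1 N F) (cnt h s) + F2 N (F2 N F) (cnt h s) + F3 N (F3 N F) (cnt h s)
       = complex_of_real (real N / 2 * (real N / 2 + 1)) * F (cnt h s)"
      by (rule spin_alg[OF cnt_le[OF h]])
    have "F1 N (F1 N F) (cnt h s) * wh h + F2 N (F2 N F) (cnt h s) * wh h + F3 N (F3 N F) (cnt h s) * wh h
       = (F1 N (F1 N F) (cnt h s) + F2 N (F2 N F) (cnt h s) + F3 N (F3 N F) (cnt h s)) * wh h"
      by (simp add: algebra_simps)
    also have "\<dots> = complex_of_real (real N / 2 * (real N / 2 + 1)) * (F (cnt h s) * wh h)"
      unfolding sa by (simp add: mult.assoc)
    finally show ?thesis unfolding S K_conf[OF h] .
  next
    case False then show ?thesis by (simp add: K_invalid)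
  qed
  finally show "Stot2 Ns (K F) S = complex_of_real (real N / 2 * (real N / 2 + 1)) * K F S" .
qed

end


lemma vs_fvec: "vector_space (\<lambda>c (\<psi>::fvec). \<lambda>S. c * \<psi> S)"
  by unfold_locales (auto simp: fun_eq_iff algebra_simps)

lemma sum_fun_apply: "(sum f A) x = (\<Sum>a\<in>A. f a x)"
  by (induction A rule: infinite_finite_induct) auto

definition delta :: "nat \<Rightarrow> nat \<Rightarrow> complex" where "delta k u = (if u = k then 1 else 0)"

context hub begin

lemma NN: "N < Ns" using Ns2 by simp

lemma K_canon: assumes "k \<le> N" shows "K F (conf N (\<lambda>x. x < k)) = F k * wh N"
  using K_conf[OF NN, of F "\<lambda>x. x < k"] cnt_canon[OF assms] by simp

lemma K_Hspace: "K F \<in> Hspace Ns N"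
  unfolding Hspace_def
proof (intro CollectI allI impI)
  fix S assume "K F S \<noteq> 0"
  then have "valid S" using K_invalid by blast
  then obtain h s where h: "h < Ns" and S: "S = conf h s" unfolding valid_def by blast
  show "S \<subseteq> {..<Ns} \<times> UNIV \<and> card S = N" unfolding S using conf_sub card_conf[OF h] by simp
qed

lemma H_K: "hubbardH Ns (\<lambda>x y. t * lam x * lam y) U (K F) = (\<lambda>_. 0)"
  by (rule H_zero) (use Aop_K nodbl_K in auto)

lemma groundEnergy0:
  assumes t: "t > 0" and U: "U > 0"
  shows "groundEnergy Ns (\<lambda>x y. t * lam x * lam y) U N = 0"
  unfolding groundEnergy_def
proof (rule cInf_eq_minimum)
  let ?\<psi> = "K (\<lambda>_. 1)"
  have "?\<psi> (conf 0 (\<lambda>_. True)) = wh 0" using K_conf[of 0] Ns2 by simp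
  then have nz: "?\<psi> (conf 0 (\<lambda>_. True)) \<noteq> 0" using wh_nz[of 0] Ns2 by simp
  show "0 \<in> {E. \<exists>\<psi>\<in>Hspace Ns N. (\<exists>S. \<psi> S \<noteq> 0) \<and>
        hubbardH Ns (\<lambda>x y. t * lam x * lam y) U \<psi> = (\<lambda>S. complex_of_real E * \<psi> S)}"
    using K_Hspace nz H_K by fastforce
next
  fix E assume "E \<in> {E. \<exists>\<psi>\<in>Hspace Ns N. (\<exists>S. \<psi> S \<noteq> 0) \<and>
        hubbardH Ns (\<lambda>x y. t * lam x * lam y) U \<psi> = (\<lambda>S. complex_of_real E * \<psi> S)}"
  then obtain \<psi> S where "\<psi> \<in> Hspace Ns N" "\<psi> S \<noteq> 0"
     "hubbardH Ns (\<lambda>x y. t * lam x * lam y) U \<psi> = (\<lambda>S. complex_of_real E * \<psi> S)" by blast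
  then show "0 \<le> E" using E_nonneg[OF t U] by blast
qed

lemma groundSpace_eq:
  assumes t: "t > 0" and U: "U > 0"
  shows "groundSpace Ns (\<lambda>x y. t * lam x * lam y) U N = range K"
proof
  show "groundSpace Ns (\<lambda>x y. t * lam x * lam y) U N \<subseteq> range K"
  proof
    fix \<psi> assume "\<psi> \<in> groundSpace Ns (\<lambda>x y. t * lam x * lam y) U N"
    then have H: "\<psi> \<in> Hspace Ns N" and e: "hubbardH Ns (\<lambda>x y. t * lam x * lam y) U \<psi> = (\<lambda>S. 0)"
      unfolding groundSpace_def groundEnergy0[OF t U] by auto
    show "\<psi> \<in> range K"
      using ground_is_K[OF H ground_char(1)[OF t U H e] ground_char(2)[OF t U H e]] by blast
  qed
next
  show "range K \<subseteq> groundSpace Ns (\<lambda>x y. t * lam x * lam y) U N"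
    unfolding groundSpace_def groundEnergy0[OF t U] using K_Hspace H_K by auto
qed

lemma dimK: "cdim (range K) = Ns"
proof -
  interpret V: vector_space "\<lambda>c (\<psi>::fvec). \<lambda>S. c * \<psi> S" by (rule vs_fvec)
  define B where "B = (\<lambda>k. K (delta k)) ` {..N}"
  have Kd: "K (delta j) (conf N (\<lambda>x. x < k)) = delta j k * wh N" if "k \<le> N" for j k
    using K_canon[OF that] .
  have inj: "inj_on (\<lambda>k. K (delta k)) {..N}"
  proof (rule inj_onI)
    fix j k assume j: "j \<in> {..N}" and k: "k \<in> {..N}" and e: "K (delta j) = K (delta k)"
    have "K (delta j) (conf N (\<lambda>x. x < j)) = K (delta k) (conf N (\<lambda>x. x < j))" using e by simp
    then have "delta j j * wh N = delta k j * wh N" using Kd j by simp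
    then show "j = k" using wh_nz[OF NN] by (auto simp: delta_def split: if_splits)
  qed
  have cardB: "card B = Ns" unfolding B_def using card_image[OF inj] Ns2 by simp
  have finB: "finite B" unfolding B_def by simp
  have indep: "V.independent B"
  proof (rule V.independent_if_scalars_zero[OF finB])
    fix c v
    assume s0: "(\<Sum>v\<in>B. (\<lambda>S. c v * v S)) = 0" and v: "v \<in> B"
    then obtain k where k: "k \<le> N" and vk: "v = K (delta k)" unfolding B_def by blast
    let ?S = "conf N (\<lambda>x. x < k)"
    have "(\<Sum>w\<in>B. c w * w ?S) = 0"
      using fun_cong[OF s0, of ?S] by (simp add: sum_fun_apply)
    moreover have "(\<Sum>w\<in>B. c w * w ?S) = c v * v ?S + (\<Sum>w\<in>B - {v}. c w * w ?S)"
      by (rule sum.remove[OF finB v])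
    moreover have "(\<Sum>w\<in>B - {v}. c w * w ?S) = 0"
    proof (rule sum.neutral, rule ballI)
      fix w assume w: "w \<in> B - {v}"
      then obtain j where j: "j \<le> N" and wj: "w = K (delta j)" unfolding B_def by blast
      have "j \<noteq> k" using w wj vk by auto
      then show "c w * w ?S = 0" unfolding wj Kd[OF k] by (simp add: delta_def)
    qed
    moreover have "v ?S = wh N" unfolding vk Kd[OF k] by (simp add: delta_def)
    ultimately show "c v = 0" using wh_nz[OF NN] by simp
  qed
  have sub1: "B \<subseteq> range K" unfolding B_def by auto
  have sub2: "range K \<subseteq> V.span B"
  proof
    fix \<psi> assume "\<psi> \<in> range K"
    then obtain F where psi: "\<psi> = K F" by blast
    have "K F = (\<Sum>k\<in>{..N}. (\<lambda>S. F k * K (delta k) S))"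
    proof (rule ext)
      fix S
      show "K F S = (\<Sum>k\<in>{..N}. (\<lambda>S. F k * K (delta k) S)) S"
      proof (cases "valid S")
        case True
        then obtain h s where h: "h < Ns" and S: "S = conf h s" unfolding valid_def by blast
        have "(\<Sum>k\<in>{..N}. F k * K (delta k) S) = (\<Sum>k\<in>{..N}. if k = cnt h s then F k * wh h else 0)"
          by (intro sum.cong refl) (simp add: S K_conf[OF h] delta_def)
        also have "\<dots> = F (cnt h s) * wh h" using cnt_le[OF h] by simp
        finally show ?thesis unfolding sum_fun_apply S K_conf[OF h] by simp
      next
        case False
        then show ?thesis unfolding sum_fun_apply by (simp add: K_invalid)
      qed
    qed
    moreover have "(\<Sum>k\<in>{..N}. (\<lambda>S. F k * K (delta k) S)) \<in> V.span B"
      by (intro V.span_sum V.span_scale V.span_base) (auto simp: B_def)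
    ultimately show "\<psi> \<in> V.span B" using psi by simp
  qed
  have "V.span B = V.span (range K)"
  proof
    show "V.span B \<subseteq> V.span (range K)" by (rule V.span_mono[OF sub1])
    show "V.span (range K) \<subseteq> V.span B" by (rule V.span_minimal[OF sub2 V.subspace_span])
  qed
  then have "V.dim (range K) = card B" by (rule V.dim_eq_card[OF _ indep])
  then show ?thesis unfolding cdim_def cardB .
qed

end

theorem mainTheorem7:
  fixes Ns :: nat and t U :: real and lam :: "nat \<Rightarrow> real"
  assumes "Ns \<ge> 2" and "t > 0" and "\<forall>x<Ns. lam x > 0" and "U > 0"
  shows "real (cdim (groundSpace Ns (\<lambda>x y. t * lam x * lam y) U (Ns - 1))) = 2 * (real (Ns - 1) / 2) + 1
       \<and> (\<forall>\<psi>\<in>groundSpace Ns (\<lambda>x y. t * lam x * lam y) U (Ns - 1).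
            (\<exists>S. \<psi> S \<noteq> 0) \<longrightarrow> hasTotalSpin Ns (real (Ns - 1) / 2) \<psi>)"
proof -
  interpret hub Ns lam by unfold_locales (use assms in auto)
  have gs: "groundSpace Ns (\<lambda>x y. t * lam x * lam y) U (Ns - 1) = range K"
    by (rule groundSpace_eq) (use assms in auto)
  have 1: "real (cdim (groundSpace Ns (\<lambda>x y. t * lam x * lam y) U (Ns - 1))) = 2 * (real (Ns - 1) / 2) + 1"
  proof -
    have "real (Ns - 1) = real Ns - 1" using assms(1) by (simp add: of_nat_diff)
    then show ?thesis unfolding gs dimK by (simp add: field_simps)
  qed
  have 2: "hasTotalSpin Ns (real (Ns - 1) / 2) \<psi>" if psi: "\<psi> \<in> range K" for \<psi>
  proof -
    obtain F where e: "\<psi> = K F" using psi by blast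
    show ?thesis unfolding hasTotalSpin_def e by (rule Stot2_K)
  qed
  show ?thesis using 1 2 gs by auto
qed

end
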